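(* Let $0\le\alpha<n$, $m$ a nonnegative integer, $0<\eta\le1$, $0<\delta<\min\{\eta,(n-\alpha)/m\}$, $1\le r\le\infty$, $\tilde\alpha=m\delta+\alpha$, $\tilde\delta\le\delta$. Let $(w,v)$ be weights such that $v^{r'}$ satisfies a doubling condition. If there is $C$ such that for every ball $B$ with center $x_B$ $$|B|^{\frac{\delta-\tilde\delta}{n}}\Big(\int_{\mathbb{R}^n\setminus B}\frac{v^{r'}(y)}{|x_B-y|^{r'(n-\tilde\alpha+\delta)}}dy\Big)^{1/r'}\le C\frac{w(B)}{|B|},$$ then there is $C'$ such that for every ball $B$ $$|B|^{\frac{\tilde\alpha-\tilde\delta}{n}-\frac1r}\Big(\frac{1}{|B|}\int_Bv^{r'}(y)\,dy\Big)^{1/r'}\le C'\frac{w(B)}{|B|}.$$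
   Context: A weight is a nonnegative locally integrable function; $w(B)=\int_Bw$; $r'$ is the conjugate exponent of $r$. A weight $u$ is doubling if $\int_{2B}u\le C\int_Bu$ for all balls $B$, $2B$ being the concentric ball of twice the radius. If $m=0$, $(n-\alpha)/m$ is read as $+\infty$. *)

theory Defs
  imports "HOL-Analysis.Analysis" "HOL-Probability.Essential_Supremum"
begin

definition weight :: "('a::euclidean_space \<Rightarrow> real) \<Rightarrow> bool" where
  "weight w \<longleftrightarrow> (\<forall>x. 0 \<le> w x) \<and> w \<in> borel_measurable lebesgue \<and>
     (\<forall>K. compact K \<longrightarrow> set_integrable lebesgue K w)"

definition enn_powr :: "ennreal \<Rightarrow> real \<Rightarrow> ennreal" where
  "enn_powr x p = (if x = \<infinity> then \<infinity> else ennreal (enn2real x powr p))"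

definition conj_exp :: "ereal \<Rightarrow> ereal" where
  "conj_exp r = (if r = 1 then \<infinity> else if r = \<infinity> then 1
                 else ereal (real_of_ereal r / (real_of_ereal r - 1)))"

definition inv_exp :: "ereal \<Rightarrow> real" where
  "inv_exp r = (if r = \<infinity> then 0 else 1 / real_of_ereal r)"

definition Lnorm_on :: "ereal \<Rightarrow> 'a::euclidean_space set \<Rightarrow> ('a \<Rightarrow> real) \<Rightarrow> ennreal" where
  "Lnorm_on p S f = (if p = \<infinity> then e2ennreal (esssup lebesgue (\<lambda>y. ereal (indicator S y * f y)))
     else enn_powr (\<integral>\<^sup>+ y\<in>S. ennreal (f y powr real_of_ereal p) \<partial>lebesgue) (1 / real_of_ereal p))"

definition Lavg_on :: "ereal \<Rightarrow> 'a::euclidean_space set \<Rightarrow> ('a \<Rightarrow> real) \<Rightarrow> ennreal" where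
  "Lavg_on p S f = (if p = \<infinity> then e2ennreal (esssup lebesgue (\<lambda>y. ereal (indicator S y * f y)))
     else enn_powr ((\<integral>\<^sup>+ y\<in>S. ennreal (f y powr real_of_ereal p) \<partial>lebesgue)
                      / ennreal (measure lebesgue S)) (1 / real_of_ereal p))"

definition doubling :: "('a::euclidean_space \<Rightarrow> real) \<Rightarrow> bool" where
  "doubling u \<longleftrightarrow> (\<exists>C::real. \<forall>x \<rho>. \<rho> > 0 \<longrightarrow>
      (\<integral>\<^sup>+ y\<in>ball x (2*\<rho>). ennreal (u y) \<partial>lebesgue) \<le> ennreal C * (\<integral>\<^sup>+ y\<in>ball x \<rho>. ennreal (u y) \<partial>lebesgue))"

definition doubling_pow :: "ereal \<Rightarrow> ('a::euclidean_space \<Rightarrow> real) \<Rightarrow> bool" where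
  "doubling_pow p v \<longleftrightarrow> (if p = \<infinity> then
      (\<exists>C::real. \<forall>x \<rho>. \<rho> > 0 \<longrightarrow> Lnorm_on \<infinity> (ball x (2*\<rho>)) v \<le> ennreal C * Lnorm_on \<infinity> (ball x \<rho>) v)
    else doubling (\<lambda>y. v y powr real_of_ereal p))"

end

theory Submission
  imports Defs
begin
lemma meas_ball:
  fixes c :: "'a::euclidean_space"
  assumes "r \<ge> 0"
  shows "measure lebesgue (ball c r) = measure lborel (ball (0::'a) 1) * r ^ DIM('a)"
  using content_ball_conv_unit_ball[OF assms, of c] by (simp add: mult.commute)

lemma enn_powr_mult:
  assumes "c \<ge> 0" "q > 0"
  shows "enn_powr (ennreal c * Y) q = ennreal (c powr q) * enn_powr Y q"
proof (cases "c = 0")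
  case True then show ?thesis by (simp add: enn_powr_def)
next
  case False
  then have c: "c > 0" using assms by simp
  show ?thesis
  proof (cases "Y = \<infinity>")
    case True then show ?thesis using c by (simp add: enn_powr_def ennreal_mult_top)
  next
    case False
    then have "ennreal c * Y \<noteq> \<infinity>" using c by (simp add: ennreal_mult_eq_top_iff)
    then show ?thesis using False c assms
      by (simp add: enn_powr_def enn2real_mult powr_mult ennreal_mult')
  qed
qed

lemma enn_powr_mono:
  assumes "X \<le> Y" "q > 0"
  shows "enn_powr X q \<le> enn_powr Y q"
proof (cases "Y = \<infinity>")
  case True then show ?thesis by (simp add: enn_powr_def)
next
  case False
  then have "X \<noteq> \<infinity>" using assms top.extremum_unique by fastforce
  then show ?thesis unfolding enn_powr_def using False assms
    by (auto intro!: ennreal_leI powr_mono2 enn2real_mono simp: less_top)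
qed

lemma e2ennreal_cmult:
  assumes "c > 0"
  shows "e2ennreal (ereal c * e) = ennreal c * e2ennreal e"
proof (cases e)
  case (real x) then show ?thesis using assms by (simp add: ennreal_mult')
next
  case PInf then show ?thesis using assms by (simp add: ennreal_mult_top)
next
  case MInf then show ?thesis using assms by (simp add: e2ennreal_neg)
qed

lemma Lnorm_mono:
  fixes f g :: "'a::euclidean_space \<Rightarrow> real"
  assumes P: "1 \<le> P" and ST: "S \<subseteq> T" and fg: "\<And>y. y \<in> S \<Longrightarrow> f y \<le> g y"
    and f0: "\<And>y. y \<in> S \<Longrightarrow> 0 \<le> f y" and g0: "\<And>y. 0 \<le> g y"
    and meas: "(\<lambda>y. ereal (indicator S y * f y)) \<in> borel_measurable lebesgue"
  shows "Lnorm_on P S f \<le> Lnorm_on P T g"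
proof (cases "P = \<infinity>")
  case True
  have "esssup lebesgue (\<lambda>y. ereal (indicator S y * f y)) \<le> esssup lebesgue (\<lambda>y. ereal (indicator T y * g y))"
    using meas
  proof (rule esssup_mono)
    fix y show "ereal (indicator S y * f y) \<le> ereal (indicator T y * g y)"
      using ST fg g0 by (auto simp: indicator_def)
  qed
  then show ?thesis using True unfolding Lnorm_on_def by (simp add: e2ennreal_mono)
next
  case False
  have p: "real_of_ereal P > 0" using P False
    by (cases P) auto
  show ?thesis using False unfolding Lnorm_on_def
    apply simp
    apply (rule enn_powr_mono)
     apply (rule nn_integral_mono)
    using ST fg f0 g0 p by (auto simp: indicator_def intro!: ennreal_leI powr_mono2)
qed

lemma Lnorm_cmult:
  fixes f :: "'a::euclidean_space \<Rightarrow> real"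
  assumes P: "1 \<le> P" and c: "c > 0" and f0: "\<And>y. 0 \<le> f y"
    and meas: "f \<in> borel_measurable lebesgue" and S: "S \<in> sets lebesgue"
  shows "Lnorm_on P S (\<lambda>y. c * f y) = ennreal c * Lnorm_on P S f"
proof (cases "P = \<infinity>")
  case True
  have "esssup lebesgue (\<lambda>y. ereal (indicator S y * (c * f y))) =
        esssup lebesgue (\<lambda>y. ereal c * ereal (indicator S y * f y))"
    by (simp add: algebra_simps)
  also have "\<dots> = ereal c * esssup lebesgue (\<lambda>y. ereal (indicator S y * f y))"
    using c by (rule esssup_cmult)
  finally show ?thesis using True c unfolding Lnorm_on_def by (simp add: e2ennreal_cmult)
next
  case False
  define p where "p = real_of_ereal P"
  have p: "p > 0" using P False unfolding p_def
    by (cases P) auto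
  have "(\<integral>\<^sup>+ y\<in>S. ennreal ((c * f y) powr p) \<partial>lebesgue) =
        (\<integral>\<^sup>+ y. ennreal (c powr p) * (ennreal (f y powr p) * indicator S y) \<partial>lebesgue)"
    using c f0 by (intro nn_integral_cong) (simp add: powr_mult ennreal_mult mult.assoc)
  also have "\<dots> = ennreal (c powr p) * (\<integral>\<^sup>+ y\<in>S. ennreal (f y powr p) \<partial>lebesgue)"
    by (rule nn_integral_cmult) (use meas S in measurable)
  finally have eq: "(\<integral>\<^sup>+ y\<in>S. ennreal ((c * f y) powr p) \<partial>lebesgue) =
     ennreal (c powr p) * (\<integral>\<^sup>+ y\<in>S. ennreal (f y powr p) \<partial>lebesgue)" .
  show ?thesis using False unfolding Lnorm_on_def p_def[symmetric]
    using c p by (simp add: eq enn_powr_mult powr_powr)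
qed

lemma ennreal_max0: "ennreal (max C 0) = ennreal C"
  by (cases "C \<le> 0") (auto simp: max_def ennreal_neg)

lemma doubling_Lnorm:
  fixes v :: "'a::euclidean_space \<Rightarrow> real"
  assumes P: "1 \<le> P" and d: "doubling_pow P v"
  shows "\<exists>D\<ge>0. \<forall>x \<rho>. \<rho> > 0 \<longrightarrow> Lnorm_on P (ball x (2*\<rho>)) v \<le> ennreal D * Lnorm_on P (ball x \<rho>) v"
proof (cases "P = \<infinity>")
  case True
  then obtain C :: real where C: "\<forall>x \<rho>. \<rho> > 0 \<longrightarrow> Lnorm_on \<infinity> (ball x (2*\<rho>)) v \<le> ennreal C * Lnorm_on \<infinity> (ball x \<rho>) v"
    using d unfolding doubling_pow_def by auto
  show ?thesis
    by (rule exI[of _ "max C 0"]) (use C True in \<open>auto simp: ennreal_max0\<close>)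
next
  case False
  define p where "p = real_of_ereal P"
  have p: "p > 0" using P False unfolding p_def
    by (cases P) auto
  obtain C :: real where C: "\<forall>x \<rho>. \<rho> > 0 \<longrightarrow>
      (\<integral>\<^sup>+ y\<in>ball x (2*\<rho>). ennreal (v y powr p) \<partial>lebesgue) \<le> ennreal C * (\<integral>\<^sup>+ y\<in>ball x \<rho>. ennreal (v y powr p) \<partial>lebesgue)"
    using d False unfolding doubling_pow_def doubling_def p_def by auto
  show ?thesis
  proof (rule exI[of _ "max C 0 powr (1/p)"], intro conjI allI impI)
    fix x :: 'a and \<rho> :: real assume "\<rho> > 0"
    then have "(\<integral>\<^sup>+ y\<in>ball x (2*\<rho>). ennreal (v y powr p) \<partial>lebesgue) \<le> ennreal (max C 0) * (\<integral>\<^sup>+ y\<in>ball x \<rho>. ennreal (v y powr p) \<partial>lebesgue)"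
      using C by (simp add: ennreal_max0)
    then have "enn_powr (\<integral>\<^sup>+ y\<in>ball x (2*\<rho>). ennreal (v y powr p) \<partial>lebesgue) (1/p) \<le>
       enn_powr (ennreal (max C 0) * (\<integral>\<^sup>+ y\<in>ball x \<rho>. ennreal (v y powr p) \<partial>lebesgue)) (1/p)"
      using p by (intro enn_powr_mono) auto
    also have "\<dots> = ennreal (max C 0 powr (1/p)) * enn_powr (\<integral>\<^sup>+ y\<in>ball x \<rho>. ennreal (v y powr p) \<partial>lebesgue) (1/p)"
      using p by (intro enn_powr_mult) auto
    finally show "Lnorm_on P (ball x (2*\<rho>)) v \<le> ennreal (max C 0 powr (1/p)) * Lnorm_on P (ball x \<rho>) v"
      using False unfolding Lnorm_on_def p_def by simp
  qed simp
qed

lemma Lavg_eq: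
  fixes v :: "'a::euclidean_space \<Rightarrow> real"
  assumes P: "1 \<le> P" and mu: "0 < measure lebesgue S"
  shows "Lavg_on P S v = ennreal (measure lebesgue S powr (- (if P = \<infinity> then 0 else 1 / real_of_ereal P))) * Lnorm_on P S v"
proof (cases "P = \<infinity>")
  case True then show ?thesis using mu unfolding Lavg_on_def Lnorm_on_def by simp
next
  case False
  define p where "p = real_of_ereal P"
  have p: "p > 0" using P False unfolding p_def
    by (cases P) auto
  define \<mu> where "\<mu> = measure lebesgue S"
  have eq: "X / ennreal \<mu> = ennreal (inverse \<mu>) * X" for X
    using mu unfolding \<mu>_def by (simp add: divide_ennreal_def inverse_ennreal mult.commute)
  have "Lavg_on P S v = enn_powr (ennreal (inverse \<mu>) * (\<integral>\<^sup>+ y\<in>S. ennreal (v y powr p) \<partial>lebesgue)) (1/p)"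
    using False unfolding Lavg_on_def p_def[symmetric] \<mu>_def[symmetric] by (simp add: eq)
  also have "\<dots> = ennreal (inverse \<mu> powr (1/p)) * Lnorm_on P S v"
    using False p mu unfolding Lnorm_on_def p_def[symmetric] \<mu>_def
    by (simp add: enn_powr_mult)
  also have "inverse \<mu> powr (1/p) = \<mu> powr (- (if P = \<infinity> then 0 else 1 / real_of_ereal P))"
    using False mu unfolding p_def[symmetric] \<mu>_def by (simp add: powr_minus inverse_powr)
  finally show ?thesis unfolding \<mu>_def .
qed

lemma rev_doubling:
  fixes N :: "'a::euclidean_space set \<Rightarrow> ennreal"
  assumes mono: "\<And>S T. S \<in> sets lebesgue \<Longrightarrow> S \<subseteq> T \<Longrightarrow> N S \<le> N T"
    and dbl: "\<And>x \<rho>. \<rho> > 0 \<Longrightarrow> N (ball x (2*\<rho>)) \<le> ennreal D * N (ball x \<rho>)"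
    and D: "D \<ge> 0" and r: "\<rho> > 0"
  shows "N (ball x \<rho>) \<le> ennreal (D^3) * N (ball x (2*\<rho>) - ball x \<rho>)"
proof -
  obtain e :: 'a where e: "e \<in> Basis" using nonempty_Basis by blast
  then have ne: "norm e = 1" by simp
  define x' where "x' = x + (3*\<rho>/2) *\<^sub>R e"
  have dx: "dist x x' = 3*\<rho>/2" unfolding x'_def dist_norm using ne r by simp
  have s1: "ball x \<rho> \<subseteq> ball x' (2*(2*(2*(\<rho>/2))))"
  proof
    fix y assume "y \<in> ball x \<rho>"
    then have "dist x y < \<rho>" by simp
    then have "dist x' y < 2*(2*(2*(\<rho>/2)))" using dist_triangle[of x' y x] dx r by (simp add: dist_commute)
    then show "y \<in> ball x' (2*(2*(2*(\<rho>/2))))" by simp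
  qed
  have s2: "ball x' (\<rho>/2) \<subseteq> ball x (2*\<rho>) - ball x \<rho>"
  proof
    fix y assume "y \<in> ball x' (\<rho>/2)"
    then have "dist x' y < \<rho>/2" by simp
    moreover have "dist x y \<le> dist x x' + dist x' y" by (rule dist_triangle)
    moreover have "dist x x' \<le> dist x y + dist y x'" by (rule dist_triangle)
    ultimately show "y \<in> ball x (2*\<rho>) - ball x \<rho>" using dx by (simp add: dist_commute)
  qed
  have "N (ball x \<rho>) \<le> N (ball x' (2*(2*(2*(\<rho>/2)))))" using s1 mono by simp
  also have "\<dots> \<le> ennreal D * N (ball x' (2*(2*(\<rho>/2))))" using dbl[of "2*(2*(\<rho>/2))" x'] r by simp
  also have "\<dots> \<le> ennreal D * (ennreal D * N (ball x' (2*(\<rho>/2))))"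
    using dbl[of "2*(\<rho>/2)" x'] r by (intro mult_left_mono) auto
  also have "\<dots> \<le> ennreal D * (ennreal D * (ennreal D * N (ball x' (\<rho>/2))))"
    using dbl[of "\<rho>/2" x'] r by (intro mult_left_mono) auto
  also have "\<dots> \<le> ennreal D * (ennreal D * (ennreal D * N (ball x (2*\<rho>) - ball x \<rho>)))"
    using mono[OF _ s2] by (intro mult_left_mono) auto
  also have "\<dots> = ennreal (D^3) * N (ball x (2*\<rho>) - ball x \<rho>)"
    using D by (simp add: ennreal_mult' power3_eq_cube mult.assoc)
  finally show ?thesis .
qed
theorem lemma3p5:
  fixes w v :: "'a::euclidean_space \<Rightarrow> real"
    and \<alpha> \<eta> \<delta> \<delta>t :: real and m :: nat and r :: ereal
  defines "n \<equiv> real DIM('a)"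
  defines "\<alpha>t \<equiv> real m * \<delta> + \<alpha>"
  defines "r' \<equiv> conj_exp r"
  assumes "0 \<le> \<alpha>" "\<alpha> < n"
    and "0 < \<eta>" "\<eta> \<le> 1"
    and "0 < \<delta>" "\<delta> < \<eta>" "m > 0 \<longrightarrow> \<delta> < (n - \<alpha>) / real m"
    and "1 \<le> r"
    and "\<delta>t \<le> \<delta>"
    and "weight w" "weight v"
    and "doubling_pow r' v"
    and "\<exists>C::real. \<forall>x \<rho>. \<rho> > 0 \<longrightarrow>
           ennreal (measure lebesgue (ball x \<rho>) powr ((\<delta> - \<delta>t) / n)) *
           Lnorm_on r' (- ball x \<rho>) (\<lambda>y. v y / dist x y powr (n - \<alpha>t + \<delta>))
           \<le> ennreal C * (\<integral>\<^sup>+ y\<in>ball x \<rho>. ennreal (w y) \<partial>lebesgue) / ennreal (measure lebesgue (ball x \<rho>))"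
  shows "\<exists>C'::real. \<forall>x \<rho>. \<rho> > 0 \<longrightarrow>
           ennreal (measure lebesgue (ball x \<rho>) powr ((\<alpha>t - \<delta>t) / n - inv_exp r)) *
           Lavg_on r' (ball x \<rho>) v
           \<le> ennreal C' * (\<integral>\<^sup>+ y\<in>ball x \<rho>. ennreal (w y) \<partial>lebesgue) / ennreal (measure lebesgue (ball x \<rho>))"
  proof -
  note nd = assms(1) and atd = assms(2) and rd = assms(3)
  have n0: "n > 0" unfolding nd by simp
  define s where "s = n - \<alpha>t + \<delta>"
  have s0: "s > 0"
  proof (cases "m > 0")
    case True
    then have "\<delta> * real m < n - \<alpha>" using assms(10) by (simp add: pos_less_divide_eq)
    then show ?thesis unfolding s_def atd using assms(8) by (simp add: algebra_simps)
  next
    case False then show ?thesis unfolding s_def atd using assms(5,8) by simp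
  qed
  have P1: "1 \<le> r'"
  proof -
    consider "r = 1" | "r = \<infinity>" | x where "r = ereal x" "x > 1"
      using assms(11) by (cases r) (auto simp: one_ereal_def le_less)
    then show ?thesis
    proof cases
      case 3 then show ?thesis unfolding rd conj_exp_def by (auto simp: field_simps)
    qed (auto simp: rd conj_exp_def)
  qed
  define q where "q = (if r' = \<infinity> then 0 else 1 / real_of_ereal r')"
  have iq: "inv_exp r + q = 1"
  proof -
    consider "r = 1" | "r = \<infinity>" | x where "r = ereal x" "x > 1"
      using assms(11) by (cases r) (auto simp: one_ereal_def le_less)
    then show ?thesis
    proof cases
      case 3 then show ?thesis unfolding q_def rd conj_exp_def inv_exp_def by (auto simp: field_simps)
    qed (auto simp: q_def rd conj_exp_def inv_exp_def)
  qed
  obtain C :: real where C: "\<And>x \<rho>. \<rho> > 0 \<Longrightarrow>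
           ennreal (measure lebesgue (ball x \<rho>) powr ((\<delta> - \<delta>t) / n)) *
           Lnorm_on r' (- ball x \<rho>) (\<lambda>y. v y / dist x y powr s)
           \<le> ennreal C * (\<integral>\<^sup>+ y\<in>ball x \<rho>. ennreal (w y) \<partial>lebesgue) / ennreal (measure lebesgue (ball x \<rho>))"
    using assms(16) unfolding s_def by blast
  obtain D where D0: "D \<ge> 0" and D: "\<And>x \<rho>. \<rho> > 0 \<Longrightarrow> Lnorm_on r' (ball x (2*\<rho>)) v \<le> ennreal D * Lnorm_on r' (ball x \<rho>) v"
    using doubling_Lnorm[OF P1 assms(15)] by blast
  have vm: "v \<in> borel_measurable lebesgue" and v0: "\<And>y. 0 \<le> v y"
    using assms(14) unfolding weight_def by auto
  have im: "(\<lambda>y. ereal (indicator S y * (c * v y))) \<in> borel_measurable lebesgue"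
    if "S \<in> sets lebesgue" for S c using that vm by measurable
  have im1: "(\<lambda>y. ereal (indicator S y * v y)) \<in> borel_measurable lebesgue"
    if "S \<in> sets lebesgue" for S using that vm by measurable
  define V where "V = measure lborel (ball (0::'a) 1)"
  have V0: "V > 0" unfolding V_def by (simp add: content_ball_pos)
  define K0 where "K0 = V powr ((\<alpha>t - \<delta> - n) / n) * 2 powr s * D^3"
  have K0: "K0 \<ge> 0" unfolding K0_def using D0 by simp
  show ?thesis
  proof (rule exI[of _ "K0 * max C 0"], intro allI impI)
    fix x :: 'a and \<rho> :: real assume r0: "\<rho> > 0"
    define \<mu> where "\<mu> = measure lebesgue (ball x \<rho>)"
    have mu: "\<mu> = V * \<rho> powr n"
      unfolding \<mu>_def V_def nd using meas_ball[of \<rho> x] r0 by (simp add: powr_realpow)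
    have mu0: "\<mu> > 0" unfolding mu using V0 r0 by simp
    define B where "B = ball x \<rho>"
    define A where "A = ball x (2*\<rho>) - B"
    define f where "f = (\<lambda>y. v y / dist x y powr s)"
    define c where "c = (2*\<rho>) powr (-s)"
    have c0: "c > 0" unfolding c_def using r0 by simp
    have Asets: "A \<in> sets lebesgue" unfolding A_def B_def by simp
    have Lavg: "Lavg_on r' B v = ennreal (\<mu> powr (-q)) * Lnorm_on r' B v"
      using Lavg_eq[OF P1, of B v] mu0 unfolding \<mu>_def B_def q_def by simp
    have LB: "Lnorm_on r' B v \<le> ennreal (D^3) * Lnorm_on r' A v"
      unfolding A_def B_def
    proof (rule rev_doubling[where N = "\<lambda>S. Lnorm_on r' S v"])
      fix S T :: "'a set" assume "S \<in> sets lebesgue" "S \<subseteq> T"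
      then show "Lnorm_on r' S v \<le> Lnorm_on r' T v"
        using v0 im1 by (intro Lnorm_mono[OF P1]) auto
    qed (use D D0 r0 in auto)
    have LA: "Lnorm_on r' A v = ennreal ((2*\<rho>) powr s) * Lnorm_on r' A (\<lambda>y. c * v y)"
    proof -
      have "ennreal ((2*\<rho>) powr s) * Lnorm_on r' A (\<lambda>y. c * v y) = ennreal ((2*\<rho>) powr s) * (ennreal c * Lnorm_on r' A v)"
        using Lnorm_cmult[OF P1 c0 v0 vm Asets] by simp
      also have "\<dots> = ennreal ((2*\<rho>) powr s * c) * Lnorm_on r' A v"
        using c0 by (simp add: ennreal_mult mult.assoc)
      also have "(2*\<rho>) powr s * c = 1" unfolding c_def using r0 by (simp add: powr_minus)
      finally show ?thesis by simp
    qed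
    have Lf: "Lnorm_on r' A (\<lambda>y. c * v y) \<le> Lnorm_on r' (- B) f"
    proof (rule Lnorm_mono[OF P1])
      show "A \<subseteq> - B" unfolding A_def by auto
      fix y assume yA: "y \<in> A"
      then have d1: "dist x y \<ge> \<rho>" and d2: "dist x y < 2*\<rho>" unfolding A_def B_def by auto
      have "dist x y powr s \<le> (2*\<rho>) powr s" using d1 d2 s0 r0 by (intro powr_mono2) auto
      moreover have "dist x y powr s > 0" using d1 r0 by (auto simp: dist_commute)
      ultimately have "v y / (2*\<rho>) powr s \<le> v y / dist x y powr s"
        using v0[of y] r0 by (intro divide_left_mono) (auto intro!: mult_pos_pos)
      then show "c * v y \<le> f y" unfolding c_def f_def by (simp add: powr_minus divide_inverse mult.commute)
      show "0 \<le> c * v y" using c0 v0[of y] by simp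
    next
      fix y show "0 \<le> f y" unfolding f_def using v0[of y] by simp
    next
      show "(\<lambda>y. ereal (indicator A y * (c * v y))) \<in> borel_measurable lebesgue" using im Asets by blast
    qed
    have real_id: "\<mu> powr ((\<alpha>t - \<delta>t) / n - inv_exp r) * \<mu> powr (-q) * D^3 * (2*\<rho>) powr s
        = K0 * \<mu> powr ((\<delta> - \<delta>t) / n)"
    proof -
      have e1: "(\<alpha>t - \<delta>t) / n - inv_exp r + (-q) = (\<alpha>t - \<delta> - n) / n + (\<delta> - \<delta>t) / n"
        using n0 unfolding eq_diff_eq'[THEN iffD2, OF iq[symmetric, unfolded add.commute[of "inv_exp r"]]]
        by (simp add: field_simps)
      have "\<mu> powr ((\<alpha>t - \<delta>t) / n - inv_exp r) * \<mu> powr (-q) = \<mu> powr ((\<alpha>t - \<delta> - n) / n) * \<mu> powr ((\<delta> - \<delta>t) / n)"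
        by (simp only: powr_add[symmetric] e1)
      moreover have "\<mu> powr ((\<alpha>t - \<delta> - n) / n) = V powr ((\<alpha>t - \<delta> - n) / n) * \<rho> powr (\<alpha>t - \<delta> - n)"
        unfolding mu using V0 r0 n0 by (simp add: powr_mult powr_powr)
      moreover have "(2*\<rho>) powr s = 2 powr s * \<rho> powr s" using r0 by (simp add: powr_mult)
      moreover have "\<rho> powr (\<alpha>t - \<delta> - n) * \<rho> powr s = 1"
        unfolding s_def using r0 by (simp add: powr_add[symmetric])
      ultimately show ?thesis unfolding K0_def by (simp add: algebra_simps)
    qed
    show "ennreal (measure lebesgue (ball x \<rho>) powr ((\<alpha>t - \<delta>t) / n - inv_exp r)) *
           Lavg_on r' (ball x \<rho>) v
           \<le> ennreal (K0 * max C 0) * (\<integral>\<^sup>+ y\<in>ball x \<rho>. ennreal (w y) \<partial>lebesgue) / ennreal (measure lebesgue (ball x \<rho>))"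
    proof -
      define g where "g = (\<alpha>t - \<delta>t) / n - inv_exp r"
      define W where "W = (\<integral>\<^sup>+ y\<in>ball x \<rho>. ennreal (w y) \<partial>lebesgue)"
      have LB2: "Lnorm_on r' B v \<le> ennreal (D^3) * (ennreal ((2*\<rho>) powr s) * Lnorm_on r' (- B) f)"
      proof -
        have "Lnorm_on r' A v \<le> ennreal ((2*\<rho>) powr s) * Lnorm_on r' (- B) f"
          unfolding LA by (rule mult_left_mono[OF Lf]) simp
        then show ?thesis by (rule order.trans[OF LB mult_left_mono]) simp
      qed
      have "ennreal (\<mu> powr g) * Lavg_on r' B v = ennreal (\<mu> powr g) * (ennreal (\<mu> powr (-q)) * Lnorm_on r' B v)"
        by (simp add: Lavg)
      also have "\<dots> \<le> ennreal (\<mu> powr g) * (ennreal (\<mu> powr (-q)) * (ennreal (D^3) * (ennreal ((2*\<rho>) powr s) * Lnorm_on r' (- B) f)))"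
        using LB2 by (intro mult_left_mono) auto
      also have "\<dots> = ennreal (\<mu> powr g * \<mu> powr (-q) * D^3 * (2*\<rho>) powr s) * Lnorm_on r' (- B) f"
      proof -
        have "ennreal (\<mu> powr g * \<mu> powr (-q) * D^3 * (2*\<rho>) powr s) =
              ennreal (\<mu> powr g) * ennreal (\<mu> powr (-q)) * ennreal (D^3) * ennreal ((2*\<rho>) powr s)"
          using D0 by (simp add: ennreal_mult)
        then show ?thesis by (simp only: mult.assoc)
      qed
      also have "\<dots> = ennreal K0 * (ennreal (\<mu> powr ((\<delta> - \<delta>t) / n)) * Lnorm_on r' (- B) f)"
        unfolding g_def real_id using K0 by (simp only: ennreal_mult[OF K0 powr_ge_zero] mult.assoc)
      also have "\<dots> \<le> ennreal K0 * (ennreal C * W / ennreal \<mu>)"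
        using C[OF r0, of x] by (intro mult_left_mono) (simp_all add: f_def B_def \<mu>_def W_def)
      also have "\<dots> = ennreal (K0 * max C 0) * W / ennreal \<mu>"
        unfolding ennreal_mult[OF K0 max.cobounded2] ennreal_max0
        by (simp only: ennreal_times_divide mult.assoc)
      finally show ?thesis unfolding g_def W_def \<mu>_def B_def .
    qed
  qed
qed

end
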